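(* Let $\Gamma$ be a group and $\alpha<\mathrm{Lit}(\Gamma)$. Then there exist finite symmetric sets $S\subseteq\Gamma$ of arbitrarily large cardinality such that $\mathrm{Cay}(\Gamma,S)$ is $\sqrt[\alpha]{|S|}$-colourable.
   Context: $T_1(\Gamma)$ is the space of all $f\colon\Gamma\to\mathbf{C}$ for which there exist $f_1,f_2\colon\Gamma\times\Gamma\to\mathbf{C}$ with $f(x^{-1}y)=f_1(x,y)+f_2(x,y)$ for all $x,y$, $\sup_x\sum_y|f_1(x,y)|<\infty$, $\sup_y\sum_x|f_2(x,y)|<\infty$; $\mathrm{Lit}(\Gamma)=\inf\{p>0:T_1(\Gamma)\subseteq\ell^p(\Gamma)\}$. $\mathrm{Cay}(\Gamma,S)$ is the graph with vertex set $\Gamma$ and an edge between $g$ and $gs$ for each $s\in S$. For a real number $t$, a graph is called $t$-colourable if its vertices can be coloured with $\lfloor t\rfloor$ colours so that adjacent vertices get different colours. *)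

theory Defs
  imports "HOL-Analysis.Analysis" "HOL-Algebra.Group"
begin

definition row_bounded :: "('a, 'b) monoid_scheme \<Rightarrow> ('a \<Rightarrow> 'a \<Rightarrow> complex) \<Rightarrow> bool" where
  "row_bounded G k \<longleftrightarrow> (\<exists>B::real. \<forall>x\<in>carrier G.
      ((\<lambda>y. norm (k x y)) summable_on (carrier G)) \<and> infsum (\<lambda>y. norm (k x y)) (carrier G) \<le> B)"

definition col_bounded :: "('a, 'b) monoid_scheme \<Rightarrow> ('a \<Rightarrow> 'a \<Rightarrow> complex) \<Rightarrow> bool" where
  "col_bounded G k \<longleftrightarrow> (\<exists>B::real. \<forall>y\<in>carrier G.
      ((\<lambda>x. norm (k x y)) summable_on (carrier G)) \<and> infsum (\<lambda>x. norm (k x y)) (carrier G) \<le> B)"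

definition T1 :: "('a, 'b) monoid_scheme \<Rightarrow> ('a \<Rightarrow> complex) set" where
  "T1 G = {f. \<exists>f1 f2. (\<forall>x\<in>carrier G. \<forall>y\<in>carrier G.
              f (inv\<^bsub>G\<^esub> x \<otimes>\<^bsub>G\<^esub> y) = f1 x y + f2 x y)
            \<and> row_bounded G f1 \<and> col_bounded G f2}"

definition lp_space :: "('a, 'b) monoid_scheme \<Rightarrow> real \<Rightarrow> ('a \<Rightarrow> complex) set" where
  "lp_space G p = {f. ((\<lambda>x. norm (f x) powr p) summable_on (carrier G))}"

text \<open>Littlewood exponent, valued in the extended reals (inf of empty set = infinity).\<close>
definition Lit :: "('a, 'b) monoid_scheme \<Rightarrow> ereal" where
  "Lit G = Inf {ereal p | p. p > 0 \<and> T1 G \<subseteq> lp_space G p}"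

definition cay_adj :: "('a, 'b) monoid_scheme \<Rightarrow> 'a set \<Rightarrow> 'a \<Rightarrow> 'a \<Rightarrow> bool" where
  "cay_adj G S g h \<longleftrightarrow> g \<in> carrier G \<and> h \<in> carrier G \<and> (\<exists>s\<in>S. h = g \<otimes>\<^bsub>G\<^esub> s)"

definition cay_colourable :: "('a, 'b) monoid_scheme \<Rightarrow> 'a set \<Rightarrow> real \<Rightarrow> bool" where
  "cay_colourable G S t \<longleftrightarrow> (\<exists>c :: 'a \<Rightarrow> nat.
      (\<forall>g\<in>carrier G. c g < nat \<lfloor>t\<rfloor>) \<and>
      (\<forall>g h. cay_adj G S g h \<longrightarrow> c g \<noteq> c h))"

definition symmetric_set :: "('a, 'b) monoid_scheme \<Rightarrow> 'a set \<Rightarrow> bool" where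
  "symmetric_set G S \<longleftrightarrow> S \<subseteq> carrier G \<and> (\<forall>s\<in>S. inv\<^bsub>G\<^esub> s \<in> S)"

end

theory Submission
  imports Defs
begin


lemma card_filter_sum: "finite A \<Longrightarrow> card {x\<in>A. P x} = (\<Sum>x\<in>A. of_bool (P x))"
proof (induct rule: finite_induct)
  case (insert x F)
  have "{y\<in>insert x F. P y} = (if P x then insert x {y\<in>F. P y} else {y\<in>F. P y})" by auto
  then show ?case using insert by simp
qed simp

lemma finite_col:
  fixes E :: "'v \<Rightarrow> 'v \<Rightarrow> bool" and out :: "'v \<Rightarrow> 'v set"
  assumes fin: "\<And>v. finite (out v)" and cd: "\<And>v. card (out v) \<le> d"
    and E: "\<And>v w. E v w \<Longrightarrow> w \<in> out v \<or> v \<in> out w" and irr: "\<And>v. \<not> E v v"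
    and W: "finite W"
  shows "\<exists>c. (\<forall>v\<in>W. c v < 2*d+1) \<and> (\<forall>v\<in>W. \<forall>w\<in>W. E v w \<longrightarrow> c v \<noteq> c w)"
  using W
proof (induction "card W" arbitrary: W rule: less_induct)
  case less
  show ?case
  proof (cases "W = {}")
    case True then show ?thesis by auto
  next
    case False
    define nb where "nb v = {w\<in>W. E v w \<or> E w v}" for v
    have nbsub: "nb v \<subseteq> (W \<inter> out v) \<union> {w\<in>W. v \<in> out w}" for v
      unfolding nb_def using E by auto
    have "\<exists>v\<in>W. card (nb v) \<le> 2*d"
    proof (rule ccontr)
      assume "\<not> ?thesis"
      hence gt: "\<forall>v\<in>W. 2*d < card (nb v)" by auto
      have "(\<Sum>v\<in>W. 2*d + 1) \<le> (\<Sum>v\<in>W. card (nb v))"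
        by (rule sum_mono) (use gt in auto)
      also have "\<dots> \<le> (\<Sum>v\<in>W. card (W \<inter> out v) + card {w\<in>W. v \<in> out w})"
      proof (rule sum_mono)
        fix x assume "x \<in> W"
        have "card (nb x) \<le> card ((W \<inter> out x) \<union> {w\<in>W. x \<in> out w})"
          by (rule card_mono) (use less.prems nbsub in auto)
        also have "\<dots> \<le> card (W \<inter> out x) + card {w\<in>W. x \<in> out w}" by (rule card_Un_le)
        finally show "card (nb x) \<le> card (W \<inter> out x) + card {w\<in>W. x \<in> out w}" .
      qed
      also have "\<dots> = (\<Sum>v\<in>W. card (W \<inter> out v)) + (\<Sum>v\<in>W. card {w\<in>W. v \<in> out w})"
        by (simp add: sum.distrib)
      also have "(\<Sum>v\<in>W. card {w\<in>W. v \<in> out w}) = (\<Sum>v\<in>W. \<Sum>w\<in>W. of_bool (v \<in> out w))"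
        using less.prems by (simp add: card_filter_sum)
      also have "\<dots> = (\<Sum>w\<in>W. \<Sum>v\<in>W. of_bool (v \<in> out w))" by (rule sum.swap)
      also have "\<dots> = (\<Sum>w\<in>W. card (W \<inter> out w))"
        using less.prems card_filter_sum[of W "\<lambda>v. v \<in> out _"] by (simp add: Int_def)
      finally have "(\<Sum>v\<in>W. 2*d + 1) \<le> 2 * (\<Sum>v\<in>W. card (W \<inter> out v))" by simp
      also have "\<dots> \<le> 2 * (\<Sum>v\<in>W. d)"
      proof -
        have "card (W \<inter> out x) \<le> d" for x
          using card_mono[OF fin[of x], of "W \<inter> out x"] cd[of x] by auto
        then have "(\<Sum>v\<in>W. card (W \<inter> out v)) \<le> (\<Sum>v\<in>W. d)" by (intro sum_mono) auto
        then show ?thesis by simp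
      qed
      finally have "card W * (2*d+1) \<le> 2 * (card W * d)" by simp
      moreover have "card W > 0" using False less.prems by auto
      ultimately show False by (simp add: algebra_simps)
    qed
    then obtain v where v: "v \<in> W" "card (nb v) \<le> 2*d" by auto
    have "card (W - {v}) < card W" using v less.prems by (meson card_Diff1_less)
    from less.hyps[OF this] less.prems obtain c where
      c: "\<forall>u\<in>W-{v}. c u < 2*d+1" "\<forall>u\<in>W-{v}. \<forall>w\<in>W-{v}. E u w \<longrightarrow> c u \<noteq> c w" by auto
    have "card (c ` nb v) < card {..<2*d+1}"
    proof -
      have "finite (nb v)" using less.prems unfolding nb_def by simp
      then have "card (c ` nb v) \<le> card (nb v)" by (rule card_image_le)
      then show ?thesis using v by simp
    qed
    then obtain a where a: "a \<in> {..<2*d+1}" "a \<notin> c ` nb v"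
    proof -
      assume h: "card (c ` nb v) < card {..<2*d+1}"
      have "finite (c ` nb v)" using less.prems unfolding nb_def by simp
      then have "\<not> {..<2*d+1} \<subseteq> c ` nb v" using h card_mono by (metis not_le)
      then show ?thesis using that by blast
    qed
    show ?thesis
    proof (intro exI[of _ "c(v := a)"] conjI ballI impI)
      fix u assume "u \<in> W" then show "(c(v := a)) u < 2*d+1" using a c by auto
    next
      fix u w assume "u \<in> W" "w \<in> W" "E u w"
      show "(c(v := a)) u \<noteq> (c(v := a)) w"
      proof (cases "u = v")
        case True
        then have "w \<noteq> v" using irr \<open>E u w\<close> by auto
        then have "w \<in> nb v" using True \<open>w \<in> W\<close> \<open>E u w\<close> unfolding nb_def by auto
        then show ?thesis using True \<open>w \<noteq> v\<close> a by force
      next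
        case False
        show ?thesis
        proof (cases "w = v")
          case True
          then have "u \<in> nb v" using \<open>u \<in> W\<close> \<open>E u w\<close> unfolding nb_def by auto
          then show ?thesis using True False a by force
        next
          case False2: False
          then show ?thesis using False c \<open>u \<in> W\<close> \<open>w \<in> W\<close> \<open>E u w\<close> by auto
        qed
      qed
    qed
  qed
qed


lemma inf_col:
  fixes E :: "'v \<Rightarrow> 'v \<Rightarrow> bool" and out :: "'v \<Rightarrow> 'v set" and V :: "'v set"
  assumes fin: "\<And>v. finite (out v)" and cd: "\<And>v. card (out v) \<le> d"
    and E: "\<And>v w. E v w \<Longrightarrow> w \<in> out v \<or> v \<in> out w" and irr: "\<And>v. \<not> E v v"
  shows "\<exists>c. (\<forall>v\<in>V. c v < 2*d+1) \<and> (\<forall>v\<in>V. \<forall>w\<in>V. E v w \<longrightarrow> c v \<noteq> c w)"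
proof -
  define k where "k = 2*d+1"
  define X where "X = product_topology (\<lambda>_::'v. discrete_topology {..<k}) V"
  have cX: "compact_space X" unfolding X_def compact_space_product_topology
    by (simp add: compact_space_discrete_topology)
  have tX: "topspace X = (\<Pi>\<^sub>E i\<in>V. {..<k})" by (simp add: X_def)
  define D where "D p = {c \<in> topspace X. c (fst p) \<noteq> c (snd p)}" for p
  define P where "P = {(v,w). v\<in>V \<and> w\<in>V \<and> E v w}"
  define U where "U = insert (topspace X) (D ` P)"
  have pre: "closedin X {c \<in> topspace X. c v \<in> C}" if "v \<in> V" "C \<subseteq> {..<k}" for v C
    using closedin_continuous_map_preimage[OF continuous_map_product_projection[OF that(1),
        of "\<lambda>_. discrete_topology {..<k}"], of C] that(2) unfolding X_def by simp
  have closedD: "closedin X (D p)" if hp: "p \<in> P" for p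
  proof -
    obtain v w where p: "p = (v,w)" "v\<in>V" "w\<in>V" using hp unfolding P_def by auto
    have "D p = (\<Union>a\<in>{..<k}. {c\<in>topspace X. c v \<in> {a}} \<inter> {c\<in>topspace X. c w \<in> {..<k} - {a}})"
      unfolding D_def p using p(2,3) by (auto simp: tX PiE_iff)
    also have "closedin X \<dots>"
    proof (rule closedin_Union)
      fix T assume "T \<in> (\<lambda>a. {c\<in>topspace X. c v \<in> {a}} \<inter> {c\<in>topspace X. c w \<in> {..<k} - {a}}) ` {..<k}"
      then obtain a where a: "a < k" "T = {c\<in>topspace X. c v \<in> {a}} \<inter> {c\<in>topspace X. c w \<in> {..<k} - {a}}" by auto
      show "closedin X T" unfolding a(2)
        by (intro closedin_Int pre) (use a p in auto)
    qed simp
    finally show ?thesis .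
  qed
  have clU: "\<forall>C\<in>U. closedin X C" unfolding U_def using closedD by auto
  have fipU: "\<forall>F. finite F \<and> F \<subseteq> U \<longrightarrow> \<Inter>F \<noteq> {}"
  proof (intro allI impI)
    fix F assume F: "finite F \<and> F \<subseteq> U"
    then have "F - {topspace X} \<subseteq> D ` P" "finite (F - {topspace X})" unfolding U_def by auto
    then obtain P' where P': "P' \<subseteq> P" "finite P'" "F - {topspace X} = D ` P'"
      using finite_subset_image by metis
    define W where "W = fst ` P' \<union> snd ` P'"
    have "finite W" using P' unfolding W_def by auto
    have "\<exists>c. (\<forall>v\<in>W. c v < 2*d+1) \<and> (\<forall>v\<in>W. \<forall>w\<in>W. E v w \<longrightarrow> c v \<noteq> c w)"
      by (rule finite_col[of out d E W]) (use fin cd E irr \<open>finite W\<close> in auto)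
    then obtain c0 where
      c0: "\<forall>v\<in>W. c0 v < 2*d+1" "\<forall>v\<in>W. \<forall>w\<in>W. E v w \<longrightarrow> c0 v \<noteq> c0 w" by blast
    define c where "c x = (if x \<in> V then (if x \<in> W then c0 x else 0) else undefined)" for x
    have WV: "W \<subseteq> V" using P' unfolding W_def P_def by auto
    have ctop: "c \<in> topspace X" unfolding tX c_def using c0 k_def by (auto simp: PiE_iff extensional_def)
    have "c \<in> D p" if hp: "p \<in> P'" for p
    proof -
      obtain v w where p: "p = (v,w)" by (cases p)
      have "v \<in> W" "w \<in> W" using hp p unfolding W_def by force+
      moreover have "E v w" using hp p P' unfolding P_def by auto
      ultimately show ?thesis using ctop c0 WV unfolding D_def c_def p by auto
    qed
    then have "c \<in> \<Inter>F" using ctop P'(3) by blast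
    then show "\<Inter>F \<noteq> {}" by blast
  qed
  have "\<Inter>U \<noteq> {}" using cX unfolding compact_space_fip using clU fipU by blast
  then obtain c where c: "c \<in> \<Inter>U" by blast
  have "c \<in> topspace X" using c unfolding U_def by auto
  then have "\<forall>v\<in>V. c v < 2*d+1" unfolding tX k_def by (auto simp: PiE_iff)
  moreover have "\<forall>v\<in>V. \<forall>w\<in>V. E v w \<longrightarrow> c v \<noteq> c w"
  proof (intro ballI impI)
    fix v w assume "v \<in> V" "w \<in> V" "E v w"
    then have "(v,w) \<in> P" unfolding P_def by auto
    then have "c \<in> D (v,w)" using c unfolding U_def by auto
    then show "c v \<noteq> c w" unfolding D_def by auto
  qed
  ultimately show ?thesis by blast
qed



lemma pw:
  fixes M \<alpha> \<beta> :: real and k :: nat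
  assumes M: "0 < M"
  shows "(M / 2^(k+1)) powr (-\<alpha>) * (M / 2^k) powr \<beta>
         = 2 powr \<alpha> * M powr (\<beta> - \<alpha>) * (2 powr (\<alpha> - \<beta>))^k"
proof -
  define y where "y = M / 2^k"
  have y: "0 < y" using M unfolding y_def by simp
  have e1: "M / 2^(k+1) = y / 2" unfolding y_def by simp
  have e2: "(y/2) powr (-\<alpha>) = y powr (-\<alpha>) * 2 powr \<alpha>"
  proof -
    have "(y/2) powr (-\<alpha>) = y powr (-\<alpha>) / 2 powr (-\<alpha>)" by (rule powr_divide)
    also have "(2::real) powr (-\<alpha>) = inverse (2 powr \<alpha>)" by (rule powr_minus)
    also have "y powr (-\<alpha>) / inverse (2 powr \<alpha>) = y powr (-\<alpha>) * 2 powr \<alpha>"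
      by (simp only: divide_inverse inverse_inverse_eq)
    finally show ?thesis .
  qed
  have e3: "y powr (-\<alpha>) * y powr \<beta> = y powr (\<beta> - \<alpha>)"
    using powr_add[of y "-\<alpha>" \<beta>] by simp
  have e4: "y powr (\<beta> - \<alpha>) = M powr (\<beta> - \<alpha>) / (2^k) powr (\<beta> - \<alpha>)"
    unfolding y_def by (rule powr_divide)
  have e5: "((2::real)^k) powr (\<beta> - \<alpha>) = (2 powr (\<beta> - \<alpha>))^k"
  proof -
    have "((2::real)^k) = 2 powr (real k)" by (rule powr_realpow[of 2 k, symmetric]) simp
    then have "((2::real)^k) powr (\<beta> - \<alpha>) = 2 powr (real k * (\<beta> - \<alpha>))"
      by (simp only: powr_powr)
    also have "\<dots> = (2 powr (\<beta> - \<alpha>))^k" by (rule powr_power[symmetric]) simp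
    finally show ?thesis .
  qed
  have e6: "(2 powr (\<alpha> - \<beta>)) = inverse (2 powr (\<beta> - \<alpha>))"
  proof -
    have "\<alpha> - \<beta> = -(\<beta> - \<alpha>)" by simp
    then show ?thesis by (simp only: powr_minus)
  qed
  have "(M / 2^(k+1)) powr (-\<alpha>) * (M / 2^k) powr \<beta> = 2 powr \<alpha> * (y powr (-\<alpha>) * y powr \<beta>)"
    unfolding e1 e2 y_def[symmetric] by (simp only: ac_simps)
  also have "\<dots> = 2 powr \<alpha> * (M powr (\<beta> - \<alpha>) / (2 powr (\<beta> - \<alpha>))^k)"
    unfolding e3 e4 e5 ..
  also have "\<dots> = 2 powr \<alpha> * M powr (\<beta> - \<alpha>) * (2 powr (\<alpha> - \<beta>))^k"
    unfolding e6 by (simp add: divide_inverse power_inverse)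
  finally show ?thesis .
qed

lemma lev_bounds:
  fixes y :: real
  assumes "1 \<le> y"
  shows "2^(nat \<lfloor>log 2 y\<rfloor>) \<le> y \<and> y < 2^(nat \<lfloor>log 2 y\<rfloor> + 1)"
proof -
  have "0 \<le> log 2 y" using assms by simp
  then have f0: "0 \<le> \<lfloor>log 2 y\<rfloor>" by simp
  have h: "2 powr (real_of_int \<lfloor>log 2 y\<rfloor>) \<le> y \<and> y < 2 powr (real_of_int \<lfloor>log 2 y\<rfloor> + 1)"
    using floor_log_eq_powr_iff[of y 2 "\<lfloor>log 2 y\<rfloor>"] assms by simp
  have h1: "real_of_int \<lfloor>log 2 y\<rfloor> = real (nat \<lfloor>log 2 y\<rfloor>)" using f0 by simp
  have h2: "real_of_int \<lfloor>log 2 y\<rfloor> + 1 = real (nat \<lfloor>log 2 y\<rfloor> + 1)" using f0 by simp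
  have "2 powr real (nat \<lfloor>log 2 y\<rfloor>) \<le> y \<and> y < 2 powr real (nat \<lfloor>log 2 y\<rfloor> + 1)"
    using h unfolding h2 unfolding h1 .
  then show ?thesis by (simp only: powr_realpow[of 2] zero_less_numeral)
qed
lemma weak_lp:
  fixes a :: "'x \<Rightarrow> real"
  assumes nonneg: "\<And>x. x\<in>A \<Longrightarrow> 0 \<le> a x" and bnd: "\<And>x. x\<in>A \<Longrightarrow> a x \<le> M" and M: "0 < M"
    and al: "0 < \<alpha>" "\<alpha> < \<beta>" and K: "0 \<le> K"
    and H: "\<And>\<epsilon> F. 0 < \<epsilon> \<Longrightarrow> finite F \<Longrightarrow> F \<subseteq> A \<Longrightarrow> (\<forall>x\<in>F. \<epsilon> \<le> a x) \<Longrightarrow>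
              real (card F) \<le> K * \<epsilon> powr (-\<alpha>)"
  shows "(\<lambda>x. a x powr \<beta>) summable_on A"
proof -
  define q :: real where "q = 2 powr (\<alpha> - \<beta>)"
  define c where "c = K * 2 powr \<alpha> * M powr (\<beta> - \<alpha>)"
  define t where "t k = c * q^k" for k::nat
  have q: "0 < q" "q < 1" unfolding q_def using al powr_less_mono[of "\<alpha> - \<beta>" 0 "2::real"] by auto
  have summ: "summable t" unfolding t_def by (intro summable_mult summable_geometric) (use q in auto)
  have tnn: "0 \<le> t k" for k unfolding t_def c_def using K q by simp
  define lev where "lev x = nat \<lfloor>log 2 (M / a x)\<rfloor>" for x
  have levp: "M / 2^(lev x + 1) < a x \<and> a x \<le> M / 2^(lev x)" if "x\<in>A" "0 < a x" for x
  proof -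
    have "1 \<le> M / a x" using bnd[OF that(1)] that(2) by simp
    from lev_bounds[OF this] have "2^(lev x) \<le> M / a x" "M / a x < 2^(lev x + 1)"
      unfolding lev_def by auto
    then show ?thesis using that(2) by (simp add: field_simps)
  qed
  have key: "(\<Sum>x\<in>F. a x powr \<beta>) \<le> suminf t" if F: "finite F" "F \<subseteq> A" for F
  proof -
    define F0 where "F0 = {x\<in>F. 0 < a x}"
    have fF0: "finite F0" using F unfolding F0_def by simp
    have "(\<Sum>x\<in>F. a x powr \<beta>) = (\<Sum>x\<in>F0. a x powr \<beta>)"
    proof (rule sum.mono_neutral_right[OF F(1)])
      show "F0 \<subseteq> F" unfolding F0_def by auto
      show "\<forall>i\<in>F - F0. a i powr \<beta> = 0"
        using nonneg F(2) unfolding F0_def by (force simp: less_le)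
    qed
    also obtain n where n: "\<forall>x\<in>F0. lev x < n"
      using finite_nat_bounded[of "lev ` F0"] fF0 by auto
    have "(\<Sum>x\<in>F0. a x powr \<beta>) = (\<Sum>k\<in>{..<n}. \<Sum>x\<in>{x. x\<in>F0 \<and> lev x = k}. a x powr \<beta>)"
      by (rule sum.group[symmetric]) (use fF0 n in auto)
    also have "\<dots> \<le> (\<Sum>k\<in>{..<n}. t k)"
    proof (rule sum_mono)
      fix k assume "k \<in> {..<n}"
      define L where "L = {x. x\<in>F0 \<and> lev x = k}"
      have fL: "finite L" using fF0 unfolding L_def by simp
      have LA: "\<And>x. x \<in> L \<Longrightarrow> x \<in> A \<and> 0 < a x \<and> lev x = k"
        using F(2) unfolding L_def F0_def by auto
      have "(\<Sum>x\<in>L. a x powr \<beta>) \<le> (\<Sum>x\<in>L. (M/2^k) powr \<beta>)"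
      proof (rule sum_mono)
        fix x assume "x \<in> L"
        with LA levp have "0 \<le> a x" "a x \<le> M/2^k" by (auto simp: less_imp_le)
        then show "a x powr \<beta> \<le> (M/2^k) powr \<beta>" using al by (intro powr_mono2) auto
      qed
      also have "\<dots> = real (card L) * (M/2^k) powr \<beta>" by simp
      also have "real (card L) \<le> K * (M/2^(k+1)) powr (-\<alpha>)"
      proof (rule H)
        show "0 < M / 2^(k+1)" using M by simp
        show "finite L" by (rule fL)
        show "L \<subseteq> A" using LA by auto
        show "\<forall>x\<in>L. M / 2 ^ (k + 1) \<le> a x" using LA levp by (force simp: less_imp_le)
      qed
      then have "real (card L) * (M/2^k) powr \<beta> \<le> K * (M/2^(k+1)) powr (-\<alpha>) * (M/2^k) powr \<beta>"
        by (intro mult_right_mono) auto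
      also have "\<dots> = K * ((M/2^(k+1)) powr (-\<alpha>) * (M/2^k) powr \<beta>)" by (rule mult.assoc)
      also have "\<dots> = K * (2 powr \<alpha> * M powr (\<beta> - \<alpha>) * q^k)" unfolding pw[OF M] q_def ..
      also have "\<dots> = t k" unfolding t_def c_def by (simp only: mult.assoc)
      finally show "(\<Sum>x\<in>{x. x\<in>F0 \<and> lev x = k}. a x powr \<beta>) \<le> t k" unfolding L_def .
    qed
    also have "\<dots> \<le> suminf t" by (rule sum_le_suminf[OF summ]) (use tnn in auto)
    finally show ?thesis .
  qed
  show ?thesis
  proof (rule nonneg_bdd_above_summable_on)
    show "\<And>x. x \<in> A \<Longrightarrow> 0 \<le> a x powr \<beta>" by simp
    show "bdd_above (sum (\<lambda>x. a x powr \<beta>) ` {F. F \<subseteq> A \<and> finite F})"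
      by (rule bdd_aboveI[of _ "suminf t"]) (use key in auto)
  qed
qed



lemma cnt:
  fixes g :: "'x \<Rightarrow> real"
  assumes s: "g summable_on A" and nn: "\<And>y. y\<in>A \<Longrightarrow> 0 \<le> g y" and B: "infsum g A \<le> B" and d: "0 < \<delta>"
  shows "finite {y\<in>A. \<delta> \<le> g y} \<and> real (card {y\<in>A. \<delta> \<le> g y}) * \<delta> \<le> B"
proof -
  have T: "real (card T) * \<delta> \<le> B" if "finite T" "T \<subseteq> {y\<in>A. \<delta> \<le> g y}" for T
  proof -
    have "real (card T) * \<delta> = (\<Sum>y\<in>T. \<delta>)" by simp
    also have "\<dots> \<le> (\<Sum>y\<in>T. g y)" by (rule sum_mono) (use that in auto)
    also have "\<dots> \<le> infsum g A" by (rule finite_sum_le_infsum[OF s]) (use that nn in auto)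
    finally show ?thesis using B by simp
  qed
  have fin: "finite {y\<in>A. \<delta> \<le> g y}"
  proof (rule ccontr)
    assume "\<not> ?thesis"
    then obtain T where "finite T" "card T = nat \<lceil>B / \<delta>\<rceil> + 1" "T \<subseteq> {y\<in>A. \<delta> \<le> g y}"
      using infinite_arbitrarily_large by blast
    then have "real (nat \<lceil>B / \<delta>\<rceil> + 1) * \<delta> \<le> B" using T by metis
    moreover have "B / \<delta> < real (nat \<lceil>B / \<delta>\<rceil> + 1)" by linarith
    ultimately show False using d by (simp add: field_simps)
  qed
  then show ?thesis using T by blast
qed

lemma single_le:
  fixes g :: "'x \<Rightarrow> real"
  assumes s: "g summable_on A" and nn: "\<And>y. y\<in>A \<Longrightarrow> 0 \<le> g y" and B: "infsum g A \<le> B" and y: "y \<in> A"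
  shows "g y \<le> B"
proof -
  have "sum g {y} \<le> infsum g A" by (rule finite_sum_le_infsum[OF s]) (use y nn in auto)
  then show ?thesis using B by simp
qed


theorem corollary1p8:
  fixes G :: "('a, 'b) monoid_scheme" and \<alpha> :: real
  assumes "group G" and "0 < \<alpha>" and "ereal \<alpha> < Lit G"
  shows "\<forall>N::nat. \<exists>S. finite S \<and> symmetric_set G S \<and> card S \<ge> N \<and>
           cay_colourable G S (real (card S) powr (1 / \<alpha>))"
proof
  fix N :: nat
  interpret group G by fact
  have al: "0 < \<alpha>" by fact
  obtain \<beta> :: real where \<beta>: "ereal \<alpha> < ereal \<beta>" "ereal \<beta> < Lit G"
    using ereal_dense2[OF assms(3)] by blast
  have ab: "\<alpha> < \<beta>" using \<beta>(1) by simp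
  have b0: "0 < \<beta>" using ab al by simp
  have "\<not> T1 G \<subseteq> lp_space G \<beta>"
  proof
    assume "T1 G \<subseteq> lp_space G \<beta>"
    then have "ereal \<beta> \<in> {ereal p | p. p > 0 \<and> T1 G \<subseteq> lp_space G p}" using b0 by blast
    then have "Lit G \<le> ereal \<beta>" unfolding Lit_def by (rule Inf_lower)
    then show False using \<beta>(2) by simp
  qed
  then obtain f where fT: "f \<in> T1 G" and fnl: "f \<notin> lp_space G \<beta>" by blast
  from fT have "\<exists>f1 f2. (\<forall>x\<in>carrier G. \<forall>y\<in>carrier G.
              f (inv\<^bsub>G\<^esub> x \<otimes>\<^bsub>G\<^esub> y) = f1 x y + f2 x y)
            \<and> row_bounded G f1 \<and> col_bounded G f2" unfolding T1_def by simp
  then obtain f1 f2 where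
    feq: "\<forall>x\<in>carrier G. \<forall>y\<in>carrier G. f (inv\<^bsub>G\<^esub> x \<otimes>\<^bsub>G\<^esub> y) = f1 x y + f2 x y"
    and rb: "row_bounded G f1" and cb: "col_bounded G f2" by blast
  from rb obtain B1 where B1: "\<forall>x\<in>carrier G. ((\<lambda>y. norm (f1 x y)) summable_on (carrier G)) \<and>
      infsum (\<lambda>y. norm (f1 x y)) (carrier G) \<le> B1" unfolding row_bounded_def by blast
  from cb obtain B2 where B2: "\<forall>y\<in>carrier G. ((\<lambda>x. norm (f2 x y)) summable_on (carrier G)) \<and>
      infsum (\<lambda>x. norm (f2 x y)) (carrier G) \<le> B2" unfolding col_bounded_def by blast
  have B1p: "0 \<le> B1"
  proof -
    have "0 \<le> infsum (\<lambda>y. norm (f1 \<one>\<^bsub>G\<^esub> y)) (carrier G)" by (rule infsum_nonneg) simp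
    then show ?thesis using B1[rule_format, OF one_closed] by linarith
  qed
  have B2p: "0 \<le> B2"
  proof -
    have "0 \<le> infsum (\<lambda>x. norm (f2 x \<one>\<^bsub>G\<^esub>)) (carrier G)" by (rule infsum_nonneg) simp
    then show ?thesis using B2[rule_format, OF one_closed] by linarith
  qed
  define M where "M = B1 + B2"
  define M' where "M' = M + 1"
  have M0: "0 \<le> M" unfolding M_def using B1p B2p by simp
  have M'0: "0 < M'" unfolding M'_def using M0 by simp
  have fb: "norm (f s) \<le> M'" if s: "s \<in> carrier G" for s
  proof -
    have "f (inv\<^bsub>G\<^esub> \<one>\<^bsub>G\<^esub> \<otimes>\<^bsub>G\<^esub> s) = f1 \<one>\<^bsub>G\<^esub> s + f2 \<one>\<^bsub>G\<^esub> s"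
      using feq s by blast
    then have "f s = f1 \<one>\<^bsub>G\<^esub> s + f2 \<one>\<^bsub>G\<^esub> s" using s by simp
    then have "norm (f s) \<le> norm (f1 \<one>\<^bsub>G\<^esub> s) + norm (f2 \<one>\<^bsub>G\<^esub> s)" by (simp add: norm_triangle_ineq)
    moreover have "norm (f1 \<one>\<^bsub>G\<^esub> s) \<le> B1"
      using single_le[of "\<lambda>y. norm (f1 \<one>\<^bsub>G\<^esub> y)" "carrier G" B1 s] B1 s by auto
    moreover have "norm (f2 \<one>\<^bsub>G\<^esub> s) \<le> B2"
      using single_le[of "\<lambda>x. norm (f2 x s)" "carrier G" B2 "\<one>\<^bsub>G\<^esub>"] B2 s by auto
    ultimately show ?thesis unfolding M'_def M_def by simp
  qed
  define K where "K = (4*M + M') powr \<alpha> + (real N + 1) * M' powr \<alpha>"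
  have K0: "0 \<le> K" unfolding K_def by simp
  have "\<exists>\<epsilon> F. 0 < \<epsilon> \<and> finite F \<and> F \<subseteq> carrier G \<and> (\<forall>x\<in>F. \<epsilon> \<le> norm (f x)) \<and>
          real (card F) > K * \<epsilon> powr (-\<alpha>)"
  proof (rule ccontr)
    assume "\<not> ?thesis"
    then have H: "\<And>\<epsilon> F. 0 < \<epsilon> \<Longrightarrow> finite F \<Longrightarrow> F \<subseteq> carrier G \<Longrightarrow> (\<forall>x\<in>F. \<epsilon> \<le> norm (f x)) \<Longrightarrow>
              real (card F) \<le> K * \<epsilon> powr (-\<alpha>)" by (meson not_le)
    have "(\<lambda>x. norm (f x) powr \<beta>) summable_on carrier G"
      by (rule weak_lp[OF _ fb M'0 al ab K0 H]) simp
    then show False using fnl unfolding lp_space_def by simp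
  qed
  then obtain \<epsilon> F where e0: "0 < \<epsilon>" and fF: "finite F" and FG: "F \<subseteq> carrier G"
    and Fe: "\<forall>x\<in>F. \<epsilon> \<le> norm (f x)" and cF: "real (card F) > K * \<epsilon> powr (-\<alpha>)" by blast
  have "K * \<epsilon> powr (-\<alpha>) \<ge> 0" using K0 by simp
  then have "F \<noteq> {}" using cF by auto
  then obtain x0 where "x0 \<in> F" by blast
  then have eM: "\<epsilon> \<le> M'" using Fe fb FG by force
  define R where "R = (4*M + M') / \<epsilon>"
  have R0: "0 < R" unfolding R_def using M0 M'0 e0 by simp
  have Kexp: "K * \<epsilon> powr (-\<alpha>) = R powr \<alpha> + (real N + 1) * (M' / \<epsilon>) powr \<alpha>"
  proof -
    have "\<epsilon> powr (-\<alpha>) = inverse (\<epsilon> powr \<alpha>)" by (rule powr_minus)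
    moreover have r1: "R powr \<alpha> = (4*M+M') powr \<alpha> / \<epsilon> powr \<alpha>" unfolding R_def by (rule powr_divide)
    moreover have r2: "(M'/\<epsilon>) powr \<alpha> = M' powr \<alpha> / \<epsilon> powr \<alpha>" by (rule powr_divide)
    ultimately show ?thesis unfolding K_def by (simp only: divide_inverse distrib_right mult.assoc)
  qed
  have Me1: "1 \<le> M' / \<epsilon>" using eM e0 by simp
  then have "1 \<le> (M' / \<epsilon>) powr \<alpha>" using al by (simp add: ge_one_powr_ge_zero)
  then have cF2: "real (card F) > R powr \<alpha> + real N + 1"
  proof -
    have "real N + 1 \<le> (real N + 1) * (M' / \<epsilon>) powr \<alpha>"
      using mult_left_mono[OF \<open>1 \<le> (M' / \<epsilon>) powr \<alpha>\<close>, of "real N + 1"] by simp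
    then show ?thesis using cF Kexp by linarith
  qed
  define S where "S = (F \<union> m_inv G ` F) - {\<one>\<^bsub>G\<^esub>}"
  have fS: "finite S" unfolding S_def using fF by simp
  have SG: "S \<subseteq> carrier G" unfolding S_def using FG by auto
  have one_nS: "\<one>\<^bsub>G\<^esub> \<notin> S" unfolding S_def by simp
  have symS: "symmetric_set G S"
    unfolding symmetric_set_def
  proof (intro conjI ballI SG)
    fix s assume s: "s \<in> S"
    then have sG: "s \<in> carrier G" using SG by auto
    have "inv\<^bsub>G\<^esub> s \<noteq> \<one>\<^bsub>G\<^esub>" using s sG one_nS by auto
    moreover have "inv\<^bsub>G\<^esub> s \<in> F \<union> m_inv G ` F" using s FG unfolding S_def by auto
    ultimately show "inv\<^bsub>G\<^esub> s \<in> S" unfolding S_def by simp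
  qed
  have "card (F - {\<one>\<^bsub>G\<^esub>}) \<le> card S" by (rule card_mono[OF fS]) (auto simp: S_def)
  moreover have "card F \<le> card (F - {\<one>\<^bsub>G\<^esub>}) + 1"
  proof (cases "\<one>\<^bsub>G\<^esub> \<in> F")
    case True
    then have "card F > 0" using fF card_gt_0_iff by blast
    then show ?thesis using True fF by (simp add: card_Diff_singleton)
  qed simp
  ultimately have cS: "real (card F) \<le> real (card S) + 1" by simp
  have "0 \<le> R powr \<alpha>" by simp
  then have "real N < real (card S)" using cS cF2 by linarith
  then have cSN: "N \<le> card S" by simp
  have cSR: "R powr \<alpha> < real (card S)" using cS cF2 by simp
  define out where "out v = (if v \<in> carrier G then
      {w\<in>carrier G. \<epsilon>/2 \<le> norm (f1 v w)} \<union> {w\<in>carrier G. \<epsilon>/2 \<le> norm (f2 w v)} else {})" for v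
  define d where "d = nat \<lfloor>2 * M / \<epsilon>\<rfloor>"
  have e2: "0 < \<epsilon>/2" using e0 by simp
  have outfin: "finite (out v) \<and> card (out v) \<le> d" for v
  proof (cases "v \<in> carrier G")
    case False then show ?thesis unfolding out_def by simp
  next
    case True
    have c1: "finite {w\<in>carrier G. \<epsilon>/2 \<le> norm (f1 v w)} \<and>
        real (card {w\<in>carrier G. \<epsilon>/2 \<le> norm (f1 v w)}) * (\<epsilon>/2) \<le> B1"
      by (rule cnt) (use B1 True e2 in auto)
    have c2: "finite {w\<in>carrier G. \<epsilon>/2 \<le> norm (f2 w v)} \<and>
        real (card {w\<in>carrier G. \<epsilon>/2 \<le> norm (f2 w v)}) * (\<epsilon>/2) \<le> B2"
      by (rule cnt) (use B2 True e2 in auto)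
    have fo: "finite (out v)" unfolding out_def using True c1 c2 by simp
    have "card (out v) \<le> card {w\<in>carrier G. \<epsilon>/2 \<le> norm (f1 v w)} + card {w\<in>carrier G. \<epsilon>/2 \<le> norm (f2 w v)}"
      unfolding out_def using True card_Un_le by simp
    then have "real (card (out v)) \<le> real (card {w\<in>carrier G. \<epsilon>/2 \<le> norm (f1 v w)}) + real (card {w\<in>carrier G. \<epsilon>/2 \<le> norm (f2 w v)})"
      by linarith
    then have "real (card (out v)) * (\<epsilon>/2) \<le> (real (card {w\<in>carrier G. \<epsilon>/2 \<le> norm (f1 v w)}) + real (card {w\<in>carrier G. \<epsilon>/2 \<le> norm (f2 w v)})) * (\<epsilon>/2)"
      by (rule mult_right_mono) (use e2 in simp)
    also have "\<dots> = real (card {w\<in>carrier G. \<epsilon>/2 \<le> norm (f1 v w)}) * (\<epsilon>/2) + real (card {w\<in>carrier G. \<epsilon>/2 \<le> norm (f2 w v)}) * (\<epsilon>/2)"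
      by (rule distrib_right)
    finally have "real (card (out v)) * (\<epsilon>/2) \<le> M" using c1 c2 unfolding M_def by linarith
    then have "real (card (out v)) * \<epsilon> \<le> 2 * M" by simp
    then have "real (card (out v)) \<le> 2 * M / \<epsilon>" by (simp add: pos_le_divide_eq[OF e0])
    then have "card (out v) \<le> d" unfolding d_def by linarith
    then show ?thesis using fo by simp
  qed
  have irr: "\<not> cay_adj G S v v" for v
  proof
    assume "cay_adj G S v v"
    then obtain s where s: "s \<in> S" "v = v \<otimes>\<^bsub>G\<^esub> s" "v \<in> carrier G" unfolding cay_adj_def by blast
    then have "s = \<one>\<^bsub>G\<^esub>" using SG l_cancel_one'[of v s] by blast
    then show False using s one_nS by simp
  qed
  have Eout: "w \<in> out v \<or> v \<in> out w" if adj: "cay_adj G S v w" for v w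
  proof -
    obtain s where s: "s \<in> S" "w = v \<otimes>\<^bsub>G\<^esub> s" and vG: "v \<in> carrier G" and wG: "w \<in> carrier G"
      using adj unfolding cay_adj_def by blast
    have sG: "s \<in> carrier G" using s SG by auto
    have i1: "inv\<^bsub>G\<^esub> v \<otimes>\<^bsub>G\<^esub> w = s" using s(2) vG sG by (simp add: m_assoc[symmetric])
    have i2: "inv\<^bsub>G\<^esub> w \<otimes>\<^bsub>G\<^esub> v = inv\<^bsub>G\<^esub> s" using s(2) vG sG by (simp add: inv_mult_group m_assoc)
    have "s \<in> F \<or> inv\<^bsub>G\<^esub> s \<in> F" using s(1) FG unfolding S_def by auto
    then show ?thesis
    proof
      assume sF: "s \<in> F"
      have fs: "f s = f1 v w + f2 v w" using feq[rule_format, OF vG wG] unfolding i1 .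
      have "\<epsilon> \<le> norm (f1 v w + f2 v w)" using Fe sF unfolding fs[symmetric] by blast
      then have "\<epsilon>/2 \<le> norm (f1 v w) \<or> \<epsilon>/2 \<le> norm (f2 v w)"
        using norm_triangle_ineq[of "f1 v w" "f2 v w"] by linarith
      then show ?thesis unfolding out_def using vG wG by auto
    next
      assume sF: "inv\<^bsub>G\<^esub> s \<in> F"
      have fs: "f (inv\<^bsub>G\<^esub> s) = f1 w v + f2 w v" using feq[rule_format, OF wG vG] unfolding i2 .
      have "\<epsilon> \<le> norm (f1 w v + f2 w v)" using Fe sF unfolding fs[symmetric] by blast
      then have "\<epsilon>/2 \<le> norm (f1 w v) \<or> \<epsilon>/2 \<le> norm (f2 w v)"
        using norm_triangle_ineq[of "f1 w v" "f2 w v"] by linarith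
      then show ?thesis unfolding out_def using vG wG by auto
    qed
  qed
  have "\<exists>c. (\<forall>v\<in>carrier G. c v < 2*d+1) \<and> (\<forall>v\<in>carrier G. \<forall>w\<in>carrier G. cay_adj G S v w \<longrightarrow> c v \<noteq> c w)"
  proof -
    have fo1: "\<And>v. finite (out v)" and fo2: "\<And>v. card (out v) \<le> d" using outfin by auto
    show ?thesis by (rule inf_col[OF fo1 fo2 Eout irr])
  qed
  then obtain c where c1: "\<forall>v\<in>carrier G. c v < 2*d+1"
    and c2: "\<forall>v\<in>carrier G. \<forall>w\<in>carrier G. cay_adj G S v w \<longrightarrow> c v \<noteq> c w" by blast
  have "real (2*d+1) \<le> R"
  proof -
    have "real d \<le> 2 * M / \<epsilon>" unfolding d_def using M0 e0 by simp
    then have "real (2*d+1) \<le> 4 * M / \<epsilon> + 1" by simp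
    also have "\<dots> \<le> R"
    proof -
      have "R = 4 * M / \<epsilon> + M' / \<epsilon>" unfolding R_def by (rule add_divide_distrib)
      then show ?thesis using Me1 by linarith
    qed
    finally show ?thesis .
  qed
  also have "R = (R powr \<alpha>) powr (1/\<alpha>)" using R0 al by (simp add: powr_powr)
  also have "\<dots> \<le> real (card S) powr (1/\<alpha>)"
    using cSR al by (intro powr_mono2) auto
  finally have "real (2*d+1) \<le> real (card S) powr (1/\<alpha>)" .
  then have "2*d+1 \<le> nat \<lfloor>real (card S) powr (1/\<alpha>)\<rfloor>" by linarith
  then have "cay_colourable G S (real (card S) powr (1 / \<alpha>))"
    unfolding cay_colourable_def
  proof (intro exI[of _ c] conjI allI ballI impI)
    fix g assume "g \<in> carrier G"
    then show "c g < nat \<lfloor>real (card S) powr (1 / \<alpha>)\<rfloor>" using c1 \<open>2*d+1 \<le> _\<close> by force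
  next
    fix g h assume "cay_adj G S g h"
    moreover then have "g \<in> carrier G" "h \<in> carrier G" unfolding cay_adj_def by auto
    ultimately show "c g \<noteq> c h" using c2 by blast
  qed
  then show "\<exists>S. finite S \<and> symmetric_set G S \<and> card S \<ge> N \<and>
           cay_colourable G S (real (card S) powr (1 / \<alpha>))"
    using fS symS cSN by blast
qed

end
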